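(* For all $i < j$ in $\mathbb{N}$, the transposition $(i\ j)$ lies in the bi-immune symmetric group $G_{\mathfrak{B}}$.
   Context: $\mathbb{N}$ denotes the non-negative integers, and $\mathrm{Sym}(\mathbb{N})$ the group of all permutations of $\mathbb{N}$ under composition ($g \circ f$ means apply $f$ first). For $i \in \mathbb{N}$, $\sigma_{(i)}$ is the permutation swapping $i$ and $i+1$ and fixing all other numbers. For $A \subseteq \mathbb{N}$ with increasing enumeration $a_0 < a_1 < \cdots$, define $\sigma_A(x) = \lim_{n \to \infty} (\sigma_{(a_0)} \circ \sigma_{(a_1)} \circ \cdots \circ \sigma_{(a_n)})(x)$ (eventually constant for each $x$). A set $A$ is immune if it is infinite and contains no infinite computably enumerable subset; $A$ is bi-immune if both $A$ and $\mathbb{N} - A$ are immune. For bi-immune $A$, $\sigma_A$ is a permutation of $\mathbb{N}$. The bi-immune symmetric group $G_{\mathfrak{B}}$ is the subgroup of $\mathrm{Sym}(\mathbb{N})$ generated by $\{\sigma_A : A \text{ bi-immune}\}$. *)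

theory Defs
  imports "HOL-Algebra.Bij" "HOL-Algebra.Generated_Groups" "HOL-Library.Infinite_Set"
    "HOL-Combinatorics.Transposition"
begin

inductive prim_rec :: "nat \<Rightarrow> (nat list \<Rightarrow> nat) \<Rightarrow> bool" where
  pr_zero: "prim_rec n (\<lambda>_. 0)"
| pr_succ: "prim_rec 1 (\<lambda>xs. Suc (hd xs))"
| pr_proj: "i < n \<Longrightarrow> prim_rec n (\<lambda>xs. xs ! i)"
| pr_comp: "prim_rec m f \<Longrightarrow> length gs = m \<Longrightarrow> (\<forall>g \<in> set gs. prim_rec n g)
             \<Longrightarrow> prim_rec n (\<lambda>xs. f (map (\<lambda>g. g xs) gs))"
| pr_rec:  "prim_rec n f \<Longrightarrow> prim_rec (n + 2) g
             \<Longrightarrow> prim_rec (Suc n)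
                  (\<lambda>xs. rec_nat (f (tl xs)) (\<lambda>y r. g (y # r # tl xs)) (hd xs))"

text \<open>A set is computably enumerable iff it is Sigma-1, i.e. the projection
  of a primitive recursive binary relation (Kleene normal form).\<close>

definition ce :: "nat set \<Rightarrow> bool" where
  "ce A \<longleftrightarrow> (\<exists>R. prim_rec 2 R \<and> A = {x. \<exists>y. R [x, y] \<noteq> 0})"

definition immune :: "nat set \<Rightarrow> bool" where
  "immune A \<longleftrightarrow> infinite A \<and> \<not> (\<exists>B. B \<subseteq> A \<and> infinite B \<and> ce B)"

definition bi_immune :: "nat set \<Rightarrow> bool" where
  "bi_immune A \<longleftrightarrow> immune A \<and> immune (UNIV - A)"

definition adj_swap :: "nat \<Rightarrow> nat \<Rightarrow> nat" where
  "adj_swap i = transpose i (Suc i)"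

primrec partial_sigma :: "nat set \<Rightarrow> nat \<Rightarrow> nat \<Rightarrow> nat" where
  "partial_sigma A 0 = adj_swap (enumerate A 0)"
| "partial_sigma A (Suc n) = partial_sigma A n \<circ> adj_swap (enumerate A (Suc n))"

definition sigma_set :: "nat set \<Rightarrow> nat \<Rightarrow> nat" where
  "sigma_set A x = (THE y. \<exists>N. \<forall>n\<ge>N. partial_sigma A n x = y)"

definition G_B :: "(nat \<Rightarrow> nat) set" where
  "G_B = generate (BijGroup (UNIV :: nat set)) {sigma_set A | A. bi_immune A}"

end

theory Submission
  imports Defs "HOL-Library.Countable_Set"
begin

datatype prt = Zt | St | Pt nat | Ct prt "prt list" | Rt prt prt

fun ev :: "prt \<Rightarrow> nat list \<Rightarrow> nat" where
  "ev Zt xs = 0"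
| "ev St xs = Suc (hd xs)"
| "ev (Pt i) xs = xs ! i"
| "ev (Ct f gs) xs = ev f (map (\<lambda>g. ev g xs) gs)"
| "ev (Rt f g) xs = rec_nat (ev f (tl xs)) (\<lambda>y r. ev g (y # r # tl xs)) (hd xs)"

instance prt :: countable by countable_datatype

lemma prim_rec_ev: "prim_rec n f \<Longrightarrow> \<exists>t. f = ev t"
proof (induction rule: prim_rec.induct)
  case (pr_zero n)
  show ?case by (rule exI[of _ Zt]) (simp add: fun_eq_iff)
next
  case pr_succ
  show ?case by (rule exI[of _ St]) (simp add: fun_eq_iff)
next
  case (pr_proj i n)
  show ?case by (rule exI[of _ "Pt i"]) (simp add: fun_eq_iff)
next
  case (pr_comp m f gs n)
  obtain t where t: "f = ev t" using pr_comp by blast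
  define ts where "ts = map (\<lambda>g. SOME t. g = ev t) gs"
  have "\<forall>g\<in>set gs. \<exists>t. g = ev t" using pr_comp.IH by blast
  hence "map ev ts = gs" unfolding ts_def
    by (induction gs) (auto, metis (mono_tags) someI)
  hence "(\<lambda>xs. f (map (\<lambda>g. g xs) gs)) = ev (Ct t ts)"
    by (auto simp: fun_eq_iff t o_def)
  thus ?case by blast
next
  case (pr_rec n f g)
  then obtain t1 t2 where "f = ev t1" "g = ev t2" by blast
  thus ?case by (intro exI[of _ "Rt t1 t2"]) (simp add: fun_eq_iff)
qed

lemma countable_ce: "countable {B. ce B}"
proof -
  have "{B. ce B} \<subseteq> (\<lambda>t. {x. \<exists>y. ev t [x, y] \<noteq> 0}) ` UNIV"
    unfolding ce_def using prim_rec_ev by blast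
  thus ?thesis by (rule countable_subset) simp
qed

definition lx :: "nat set \<Rightarrow> nat \<Rightarrow> nat" where
  "lx B m = (LEAST x. x \<in> B \<and> m \<le> x)"
definition ly :: "nat set \<Rightarrow> nat \<Rightarrow> nat" where
  "ly B m = (LEAST y. y \<in> B \<and> lx B m < y)"

lemma lx_props: "infinite B \<Longrightarrow> lx B m \<in> B \<and> m \<le> lx B m"
proof -
  assume "infinite B"
  then obtain z where "z \<ge> m" "z \<in> B" using infinite_nat_iff_unbounded_le by blast
  hence "z \<in> B \<and> m \<le> z" by simp
  thus ?thesis unfolding lx_def by (rule LeastI)
qed

lemma ly_props: "infinite B \<Longrightarrow> ly B m \<in> B \<and> lx B m < ly B m"
proof -
  assume "infinite B"
  then obtain z where "z \<ge> Suc (lx B m)" "z \<in> B" using infinite_nat_iff_unbounded_le by blast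
  hence "z \<in> B \<and> lx B m < z" by simp
  thus ?thesis unfolding ly_def by (rule LeastI)
qed

primrec Mb :: "(nat \<Rightarrow> nat set) \<Rightarrow> nat \<Rightarrow> nat" where
  "Mb f 0 = 0"
| "Mb f (Suc n) = Suc (ly (f n) (Mb f n))"

lemma split_family:
  assumes "countable F" "\<forall>B\<in>F. infinite (B::nat set)"
  shows "\<exists>A. \<forall>B\<in>F. B \<inter> A \<noteq> {} \<and> B - A \<noteq> {}"
proof (cases "F = {}")
  case True thus ?thesis by blast
next
  case False
  define f where "f = from_nat_into F"
  have rf: "range f = F" using False assms(1) f_def by simp
  have inf: "infinite (f n)" for n using rf assms(2) by blast
  define x where "x n = lx (f n) (Mb f n)" for n
  define y where "y n = ly (f n) (Mb f n)" for n
  have xin: "x n \<in> f n" and yin: "y n \<in> f n" and b1: "Mb f n \<le> x n"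
    and b2: "x n < y n" and b3: "y n < Mb f (Suc n)" for n
    using lx_props[OF inf, of n "Mb f n"] ly_props[OF inf, of n "Mb f n"]
    by (auto simp: x_def y_def)
  have mono: "Mb f n \<le> Mb f m" if "n \<le> m" for n m
    using that
  proof (induction m rule: dec_induct)
    case base then show ?case by simp
  next
    case (step m) then show ?case using b1[of m] b2[of m] b3[of m] by linarith
  qed
  have ynot: "y m \<noteq> x n" for m n
  proof (cases "n \<le> m")
    case True
    show ?thesis
    proof (cases "n = m")
      case True thus ?thesis using b2[of m] by simp
    next
      case False
      hence "Suc n \<le> m" using \<open>n \<le> m\<close> by simp
      from mono[OF this] have "x n < x m" using b1[of m] b2[of n] b3[of n] by linarith
      thus ?thesis using b2[of m] by simp
    qed
  next
    case False
    hence "Suc m \<le> n" by simp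
    from mono[OF this] show ?thesis using b1[of n] b3[of m] by linarith
  qed
  show ?thesis
  proof (intro exI ballI)
    fix B assume "B \<in> F"
    then obtain n where "B = f n" using rf by blast
    thus "B \<inter> range x \<noteq> {} \<and> B - range x \<noteq> {}"
      using xin[of n] yin[of n] ynot[of n] by blast
  qed
qed

definition good :: "nat set \<Rightarrow> bool" where
  "good A \<longleftrightarrow> (\<forall>B m. infinite B \<and> ce B \<longrightarrow> B \<inter> {m..} \<inter> A \<noteq> {} \<and> B \<inter> {m..} - A \<noteq> {})
      \<and> (\<forall>m. {m..} \<inter> A \<noteq> {} \<and> {m..} - A \<noteq> {})"

lemma good_exists: "\<exists>A. good A"
proof -
  define S where "S = {B. infinite B \<and> ce B}"
  define F1 where "F1 = (\<lambda>p. fst p \<inter> {snd p..}) ` (S \<times> (UNIV::nat set))"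
  define F where "F = F1 \<union> range atLeast"
  have cS: "countable S" unfolding S_def by (rule countable_subset[OF _ countable_ce]) blast
  have "countable (S \<times> (UNIV::nat set))" using cS by (rule countable_SIGMA) simp
  hence "countable F1" unfolding F1_def by (rule countable_image)
  hence cF: "countable F" unfolding F_def by simp
  have i1: "infinite (B \<inter> {m..})" if "infinite B" for B and m :: nat
  proof -
    have "B \<inter> {m..} = B - {..<m}" by auto
    thus ?thesis using that by simp
  qed
  have i2: "infinite {m::nat..}" for m using i1[of UNIV m] by simp
  have iF: "\<forall>B\<in>F. infinite B"
  proof
    fix B assume "B \<in> F"
    then consider "B \<in> F1" | "B \<in> range atLeast" unfolding F_def by blast
    thus "infinite B"
    proof cases
      case 1
      then obtain p where "p \<in> S \<times> UNIV" "B = fst p \<inter> {snd p..}" unfolding F1_def by blast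
      thus ?thesis using i1 unfolding S_def by auto
    next
      case 2 thus ?thesis using i2 by auto
    qed
  qed
  obtain A where A: "\<forall>B\<in>F. B \<inter> A \<noteq> {} \<and> B - A \<noteq> {}" using split_family[OF cF iF] by blast
  have "good A" unfolding good_def
  proof (intro conjI allI impI)
    fix B and m :: nat assume "infinite B \<and> ce B"
    hence "(B, m) \<in> S \<times> UNIV" unfolding S_def by blast
    hence "B \<inter> {m..} \<in> F1" unfolding F1_def by (rule rev_image_eqI) simp
    hence "B \<inter> {m..} \<in> F" unfolding F_def by blast
    with A have "B \<inter> {m..} \<inter> A \<noteq> {} \<and> B \<inter> {m..} - A \<noteq> {}" by blast
    thus "B \<inter> {m..} \<inter> A \<noteq> {}" "B \<inter> {m..} - A \<noteq> {}" by blast+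
  next
    fix m :: nat
    have "{m..} \<in> F" unfolding F_def by blast
    with A have "{m..} \<inter> A \<noteq> {} \<and> {m..} - A \<noteq> {}" by blast
    thus "{m..} \<inter> A \<noteq> {}" "{m..} - A \<noteq> {}" by blast+
  qed
  thus ?thesis by blast
qed

lemma good_bi_immune:
  assumes "good A" "\<forall>x\<ge>n. x \<in> A' \<longleftrightarrow> x \<in> A"
  shows "bi_immune A'"
proof -
  have ag: "x \<in> A' \<longleftrightarrow> x \<in> A" if "x \<ge> n" for x using assms(2) that by blast
  have g1: "{m..} \<inter> A \<noteq> {}" "{m..} - A \<noteq> {}" for m using assms(1) unfolding good_def by blast+
  have g2: "B \<inter> {m..} \<inter> A \<noteq> {}" "B \<inter> {m..} - A \<noteq> {}" if "infinite B" "ce B" for B m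
    using assms(1) that unfolding good_def by blast+
  have inf1: "infinite A'" unfolding infinite_nat_iff_unbounded_le
  proof
    fix m
    obtain z where z: "z \<ge> max m n" "z \<in> A" using g1(1)[of "max m n"] by blast
    hence "z \<in> A'" using ag[of z] by simp
    thus "\<exists>z\<ge>m. z \<in> A'" using z by auto
  qed
  have inf2: "infinite (UNIV - A')" unfolding infinite_nat_iff_unbounded_le
  proof
    fix m
    obtain z where z: "z \<ge> max m n" "z \<notin> A" using g1(2)[of "max m n"] by blast
    hence "z \<notin> A'" using ag[of z] by simp
    thus "\<exists>z\<ge>m. z \<in> UNIV - A'" using z by auto
  qed
  have n1: "\<not> (B \<subseteq> A' \<and> infinite B \<and> ce B)" for B
  proof
    assume h: "B \<subseteq> A' \<and> infinite B \<and> ce B"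
    then obtain z where z: "z \<in> B" "z \<ge> n" "z \<notin> A" using g2(2)[of B n] by blast
    hence "z \<notin> A'" using ag[of z] by simp
    thus False using h z by blast
  qed
  have n2: "\<not> (B \<subseteq> UNIV - A' \<and> infinite B \<and> ce B)" for B
  proof
    assume h: "B \<subseteq> UNIV - A' \<and> infinite B \<and> ce B"
    then obtain z where z: "z \<in> B" "z \<ge> n" "z \<in> A" using g2(1)[of B n] by blast
    hence "z \<in> A'" using ag[of z] by simp
    thus False using h z by blast
  qed
  show ?thesis unfolding bi_immune_def immune_def using inf1 inf2 n1 n2 by blast
qed

lemma enum_ge: "infinite B \<Longrightarrow> n \<le> enumerate B n"
proof (induction n)
  case 0 then show ?case by simp
next
  case (Suc n)
  then show ?case using enumerate_step[OF Suc.prems, of n] by linarith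
qed

lemma adj_fix: "x < e \<Longrightarrow> adj_swap e x = x"
  unfolding adj_swap_def by simp

lemma ps_suc_x: "infinite B \<Longrightarrow> x \<le> n \<Longrightarrow> partial_sigma B (Suc n) x = partial_sigma B n x"
proof -
  assume "infinite B" "x \<le> n"
  hence "x < enumerate B (Suc n)" using enum_ge[of B "Suc n"] by simp
  thus ?thesis by (simp add: adj_fix)
qed

lemma ps_stable:
  assumes "infinite B" "x \<le> n" shows "partial_sigma B n x = partial_sigma B x x"
  using assms(2)
proof (induction n rule: dec_induct)
  case base then show ?case by simp
next
  case (step n) then show ?case using ps_suc_x[OF assms(1)] by simp
qed

lemma sigma_eq0: "infinite B \<Longrightarrow> sigma_set B x = partial_sigma B x x"
  unfolding sigma_set_def
proof (rule the_equality)
  assume inf: "infinite B"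
  show "\<exists>N. \<forall>n\<ge>N. partial_sigma B n x = partial_sigma B x x"
    using ps_stable[OF inf] by blast
  fix y assume "\<exists>N. \<forall>n\<ge>N. partial_sigma B n x = y"
  then obtain N where N: "\<forall>n\<ge>N. partial_sigma B n x = y" by blast
  have "y = partial_sigma B (max N x) x" using N by simp
  also have "\<dots> = partial_sigma B x x" using ps_stable[OF inf, of x "max N x"] by simp
  finally show "y = partial_sigma B x x" .
qed

lemma sigma_eq:
  assumes "infinite B" "x \<le> n" shows "sigma_set B x = partial_sigma B n x"
proof -
  have "sigma_set B x = partial_sigma B x x" by (rule sigma_eq0[OF assms(1)])
  also have "\<dots> = partial_sigma B n x" by (rule ps_stable[OF assms, symmetric])
  finally show ?thesis .
qed

lemma adj_bij: "bij (adj_swap k)"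
  unfolding adj_swap_def by simp

lemma ps_bij: "bij (partial_sigma B n)"
proof (induction n)
  case 0 then show ?case by (simp add: adj_bij)
next
  case (Suc n)
  show ?case unfolding partial_sigma.simps(2) by (rule bij_comp[OF adj_bij Suc.IH])
qed

lemma adj_image: "a \<noteq> z \<Longrightarrow> adj_swap a ` {..z} = {..z}"
  unfolding adj_swap_def by (rule transpose_image_eq) auto

lemma ps_image: "infinite B \<Longrightarrow> z \<notin> B \<Longrightarrow> partial_sigma B n ` {..z} = {..z}"
proof (induction n)
  case 0
  have "enumerate B 0 \<noteq> z" using enumerate_in_set[OF 0(1), of 0] 0(2) by auto
  then show ?case by (simp add: adj_image)
next
  case (Suc n)
  have "enumerate B (Suc n) \<noteq> z" using enumerate_in_set[OF Suc(2), of "Suc n"] Suc(3) by auto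
  hence "adj_swap (enumerate B (Suc n)) ` {..z} = {..z}" by (rule adj_image)
  moreover have "partial_sigma B (Suc n) ` {..z} = partial_sigma B n ` (adj_swap (enumerate B (Suc n)) ` {..z})"
    by (simp only: partial_sigma.simps(2) image_comp)
  ultimately show ?case using Suc by simp
qed

lemma sigma_bij:
  assumes "infinite B" "infinite (UNIV - B)"
  shows "bij (sigma_set B)"
proof (rule bijI)
  show "inj (sigma_set B)"
  proof (rule injI)
    fix x x' assume e: "sigma_set B x = sigma_set B x'"
    have "partial_sigma B (max x x') x = partial_sigma B (max x x') x'"
      using e sigma_eq[OF assms(1), of x "max x x'"] sigma_eq[OF assms(1), of x' "max x x'"] by simp
    thus "x = x'" using ps_bij[of B "max x x'"] by (auto dest: bij_is_inj injD)
  qed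
  show "surj (sigma_set B)"
  proof (rule surjI[where f = "\<lambda>y. SOME x. sigma_set B x = y"])
    fix y
    obtain z where z: "z \<ge> y" "z \<in> UNIV - B" using assms(2) infinite_nat_iff_unbounded_le by blast
    have "y \<in> partial_sigma B z ` {..z}" using ps_image[OF assms(1), of z z] z by auto
    then obtain x where x: "x \<le> z" "partial_sigma B z x = y" by auto
    hence "sigma_set B x = y" using sigma_eq[OF assms(1) x(1)] by simp
    thus "sigma_set B (SOME x. sigma_set B x = y) = y" by (rule someI)
  qed
qed

lemma enum_insert:
  assumes "infinite B" "\<forall>b\<in>B. k < b"
  shows "enumerate (insert k B) 0 = k" "enumerate (insert k B) (Suc n) = enumerate B n"
proof -
  have l: "(LEAST n. n \<in> insert k B) = k"
    by (rule Least_equality) (use assms(2) in auto)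
  thus "enumerate (insert k B) 0 = k" by (simp add: enumerate_0)
  have "insert k B - {k} = B" using assms(2) by auto
  thus "enumerate (insert k B) (Suc n) = enumerate B n" using l by (simp add: enumerate_Suc)
qed

lemma ps_insert:
  assumes "infinite B" "\<forall>b\<in>B. k < b"
  shows "partial_sigma (insert k B) (Suc n) = adj_swap k \<circ> partial_sigma B n"
proof (induction n)
  case 0 then show ?case by (simp only: partial_sigma.simps enum_insert[OF assms])
next
  case (Suc n)
  have "partial_sigma (insert k B) (Suc (Suc n))
        = partial_sigma (insert k B) (Suc n) \<circ> adj_swap (enumerate (insert k B) (Suc (Suc n)))"
    by (rule partial_sigma.simps(2))
  also have "\<dots> = (adj_swap k \<circ> partial_sigma B n) \<circ> adj_swap (enumerate B (Suc n))"
    by (simp only: Suc.IH enum_insert(2)[OF assms])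
  also have "\<dots> = adj_swap k \<circ> partial_sigma B (Suc n)"
    by (simp only: partial_sigma.simps(2) o_assoc)
  finally show ?case .
qed

lemma sigma_insert:
  assumes "infinite B" "\<forall>b\<in>B. k < b"
  shows "sigma_set (insert k B) = adj_swap k \<circ> sigma_set B"
proof
  fix x
  have i: "infinite (insert k B)" using assms(1) by simp
  have "sigma_set (insert k B) x = partial_sigma (insert k B) (Suc x) x"
    using sigma_eq[OF i, of x "Suc x"] by simp
  also have "\<dots> = adj_swap k (partial_sigma B x x)" by (simp only: ps_insert[OF assms] o_apply)
  also have "\<dots> = (adj_swap k \<circ> sigma_set B) x" using sigma_eq0[OF assms(1)] by simp
  finally show "sigma_set (insert k B) x = (adj_swap k \<circ> sigma_set B) x" .
qed

lemma Bij_UNIV: "bij f \<Longrightarrow> f \<in> Bij UNIV"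
  by (simp add: Bij_def extensional_def)

lemma mult_eq: "f \<in> Bij UNIV \<Longrightarrow> g \<in> Bij UNIV \<Longrightarrow> mult (BijGroup UNIV) f g = f \<circ> g"
  by (simp add: BijGroup_def compose_def restrict_UNIV o_def)

lemma inv_eq: "f \<in> Bij UNIV \<Longrightarrow> m_inv (BijGroup UNIV) f = inv_into UNIV f"
  by (simp add: inv_BijGroup restrict_UNIV)

lemma adj_in: "adj_swap k \<in> G_B"
proof -
  obtain A where A: "good A" using good_exists by blast
  define B where "B = A \<inter> {k<..}"
  have bB: "bi_immune B" by (rule good_bi_immune[OF A, of "Suc k"]) (auto simp: B_def)
  have bB': "bi_immune (insert k B)" by (rule good_bi_immune[OF A, of "Suc k"]) (auto simp: B_def)
  have iB: "infinite B" "infinite (UNIV - B)" using bB unfolding bi_immune_def immune_def by auto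
  have kB: "\<forall>b\<in>B. k < b" unfolding B_def by auto
  have sb: "bij (sigma_set B)" using sigma_bij[OF iB] .
  have si: "sigma_set (insert k B) = adj_swap k \<circ> sigma_set B" using sigma_insert[OF iB(1) kB] .
  have g1: "sigma_set (insert k B) \<in> G_B" unfolding G_B_def using bB'
    by (intro generate.incl) blast
  have g2: "m_inv (BijGroup UNIV) (sigma_set B) \<in> G_B" unfolding G_B_def using bB
    by (intro generate.inv) blast
  have e: "m_inv (BijGroup UNIV) (sigma_set B) = inv_into UNIV (sigma_set B)" using inv_eq Bij_UNIV sb by blast
  have b1: "sigma_set (insert k B) \<in> Bij UNIV" unfolding si by (rule Bij_UNIV, rule bij_comp[OF sb adj_bij])
  have b2: "inv_into UNIV (sigma_set B) \<in> Bij UNIV" using sb bij_imp_bij_inv Bij_UNIV by blast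
  have "mult (BijGroup UNIV) (sigma_set (insert k B)) (m_inv (BijGroup UNIV) (sigma_set B)) \<in> G_B"
    using g1 g2 unfolding G_B_def by (rule generate.eng)
  also have "mult (BijGroup UNIV) (sigma_set (insert k B)) (m_inv (BijGroup UNIV) (sigma_set B))
      = adj_swap k \<circ> (sigma_set B \<circ> inv_into UNIV (sigma_set B))"
    using mult_eq[OF b1 b2] e si by (simp add: o_assoc)
  also have "sigma_set B \<circ> inv_into UNIV (sigma_set B) = id"
    by (rule surj_iff[THEN iffD1, OF bij_is_surj[OF sb]])
  finally show ?thesis by simp
qed

lemma comp_in:
  assumes "f \<in> G_B" "g \<in> G_B" "bij f" "bij g" shows "f \<circ> g \<in> G_B"
proof -
  have "mult (BijGroup UNIV) f g \<in> G_B" using assms(1,2) unfolding G_B_def by (rule generate.eng)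
  thus ?thesis using mult_eq[OF Bij_UNIV[OF assms(3)] Bij_UNIV[OF assms(4)]] by simp
qed

theorem lemma2p4:
  fixes i j :: nat
  assumes "i < j"
  shows "transpose i j \<in> G_B"
proof -
  have "Suc i \<le> j" using assms by simp
  thus ?thesis
  proof (induction j rule: dec_induct)
    case base
    then show ?case using adj_in[of i] by (simp add: adj_swap_def)
  next
    case (step j)
    have eq: "transpose i (Suc j) = adj_swap j \<circ> transpose i j \<circ> adj_swap j"
    proof
      fix x
      show "transpose i (Suc j) x = (adj_swap j \<circ> transpose i j \<circ> adj_swap j) x"
        using step(1) unfolding adj_swap_def o_apply
        by (cases "x = i"; cases "x = j"; cases "x = Suc j") (simp_all add: transpose_def)
    qed
    have bt: "bij (transpose i j)" by simp
    have "adj_swap j \<circ> transpose i j \<in> G_B"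
      by (rule comp_in[OF adj_in step(3) adj_bij bt])
    moreover have "bij (adj_swap j \<circ> transpose i j)" by (rule bij_comp[OF bt adj_bij])
    ultimately have "adj_swap j \<circ> transpose i j \<circ> adj_swap j \<in> G_B"
      by (rule comp_in[OF _ adj_in _ adj_bij])
    thus ?case unfolding eq .
  qed
qed

end
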